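(* Let $a_{n,1}$ denote the number of matchings of size $n$ with exactly one occurrence of the endhered pattern $21$. Then $a_{1,1}=0$, $a_{2,1}=1$, and for all $n\ge2$, $$a_{n+1,1}=2n\,(a_{n,1}+a_{n-1,1}).$$
   Context: A matching of size $n$ is a set of $n$ arcs $(a,b)$ with $1\le a<b\le 2n$ such that each point of $\{1,\dots,2n\}$ belongs to exactly one arc. An occurrence of the endhered pattern $21$ in a matching $\mu$ is a pair of arcs of $\mu$ of the form $(i+1,j+2),(i+2,j+1)$ (two nested arcs with consecutive starting points and consecutive ending points); the number of occurrences is the number of such pairs. *)

theory Defs
  imports Main
begin

definition is_matching :: "nat \<Rightarrow> (nat \<times> nat) set \<Rightarrow> bool" where
  "is_matching n M \<longleftrightarrow>
     M \<subseteq> {(a, b). 1 \<le> a \<and> a < b \<and> b \<le> 2 * n} \<and>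
     (\<forall>p \<in> {1..2 * n}. \<exists>!e. e \<in> M \<and> (fst e = p \<or> snd e = p))"

definition occ21 :: "(nat \<times> nat) set \<Rightarrow> nat" where
  "occ21 M = card {(i, j). (i + 1, j + 2) \<in> M \<and> (i + 2, j + 1) \<in> M}"

definition a1 :: "nat \<Rightarrow> nat" where
  "a1 n = card {M. is_matching n M \<and> occ21 M = 1}"

end

theory Submission imports Defs begin

definition sh :: "nat \<Rightarrow> nat \<Rightarrow> nat" where
  "sh g p = (if p \<le> g then p else Suc p)"

definition ins :: "nat \<Rightarrow> nat \<Rightarrow> (nat \<times> nat) set \<Rightarrow> (nat \<times> nat) set" where
  "ins n g M = (\<lambda>(a,b). (sh g a, sh g b)) ` M \<union> {(Suc g, 2*n+2)}"

definition Occ :: "(nat \<times> nat) set \<Rightarrow> (nat \<times> nat) set" where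
  "Occ M = {(i, j). (i + 1, j + 2) \<in> M \<and> (i + 2, j + 1) \<in> M}"

lemma occ21_Occ: "occ21 M = card (Occ M)"
  by (simp add: occ21_def Occ_def)

lemma matching_iff:
  "is_matching n M \<longleftrightarrow> M \<subseteq> {(a, b). 1 \<le> a \<and> a < b \<and> b \<le> 2 * n} \<and>
     (\<forall>p \<in> {1..2 * n}. \<exists>e\<in>M. fst e = p \<or> snd e = p) \<and>
     (\<forall>e\<in>M. \<forall>e'\<in>M. (fst e = fst e' \<or> fst e = snd e' \<or> snd e = fst e' \<or> snd e = snd e') \<longrightarrow> e = e')"
proof
  assume H: "is_matching n M"
  then have S: "M \<subseteq> {(a, b). 1 \<le> a \<and> a < b \<and> b \<le> 2 * n}"
    and U: "\<forall>p \<in> {1..2 * n}. \<exists>!e. e \<in> M \<and> (fst e = p \<or> snd e = p)"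
    by (auto simp: is_matching_def)
  have "\<forall>e\<in>M. \<forall>e'\<in>M. (fst e = fst e' \<or> fst e = snd e' \<or> snd e = fst e' \<or> snd e = snd e') \<longrightarrow> e = e'"
  proof (intro ballI impI)
    fix e e' assume e: "e \<in> M" and e': "e' \<in> M"
      and sh: "fst e = fst e' \<or> fst e = snd e' \<or> snd e = fst e' \<or> snd e = snd e'"
    have r1: "fst e \<in> {1..2*n}" "snd e \<in> {1..2*n}" using S e by auto
    show "e = e'"
    proof (cases "fst e = fst e' \<or> fst e = snd e'")
      case True
      then show ?thesis using U[rule_format, OF r1(1)] e e' by metis
    next
      case False
      then show ?thesis using U[rule_format, OF r1(2)] e e' sh by metis
    qed
  qed
  then show "M \<subseteq> {(a, b). 1 \<le> a \<and> a < b \<and> b \<le> 2 * n} \<and>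
     (\<forall>p \<in> {1..2 * n}. \<exists>e\<in>M. fst e = p \<or> snd e = p) \<and>
     (\<forall>e\<in>M. \<forall>e'\<in>M. (fst e = fst e' \<or> fst e = snd e' \<or> snd e = fst e' \<or> snd e = snd e') \<longrightarrow> e = e')"
    using S U by blast
next
  assume H: "M \<subseteq> {(a, b). 1 \<le> a \<and> a < b \<and> b \<le> 2 * n} \<and>
     (\<forall>p \<in> {1..2 * n}. \<exists>e\<in>M. fst e = p \<or> snd e = p) \<and>
     (\<forall>e\<in>M. \<forall>e'\<in>M. (fst e = fst e' \<or> fst e = snd e' \<or> snd e = fst e' \<or> snd e = snd e') \<longrightarrow> e = e')"
  show "is_matching n M"
    unfolding is_matching_def
  proof (intro conjI ballI)
    show "M \<subseteq> {(a, b). 1 \<le> a \<and> a < b \<and> b \<le> 2 * n}" using H by blast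
    fix p assume p: "p \<in> {1..2*n}"
    then obtain e where "e \<in> M" "fst e = p \<or> snd e = p" using H by blast
    then show "\<exists>!e. e \<in> M \<and> (fst e = p \<or> snd e = p)" using H by metis
  qed
qed

lemma match_sub: "is_matching n M \<Longrightarrow> (a,b) \<in> M \<Longrightarrow> 1 \<le> a \<and> a < b \<and> b \<le> 2 * n"
proof -
  assume "is_matching n M" "(a,b) \<in> M"
  moreover have "M \<subseteq> {(a, b). 1 \<le> a \<and> a < b \<and> b \<le> 2 * n}" using \<open>is_matching n M\<close> by (simp add: is_matching_def)
  ultimately show ?thesis by auto
qed

lemma match_cov: "is_matching n M \<Longrightarrow> 1 \<le> p \<Longrightarrow> p \<le> 2*n \<Longrightarrow> \<exists>a b. (a,b) \<in> M \<and> (a = p \<or> b = p)"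
proof -
  assume M: "is_matching n M" and p: "1 \<le> p" "p \<le> 2*n"
  have "\<forall>p \<in> {1..2 * n}. \<exists>!e. e \<in> M \<and> (fst e = p \<or> snd e = p)" using M by (simp add: is_matching_def)
  then have "\<exists>!e. e \<in> M \<and> (fst e = p \<or> snd e = p)" using p by simp
  then obtain e where "e \<in> M" "fst e = p \<or> snd e = p" by (elim ex1E) blast
  then show ?thesis by (intro exI[of _ "fst e"] exI[of _ "snd e"]) auto
qed

lemma match_uniq: "is_matching n M \<Longrightarrow> (a,b) \<in> M \<Longrightarrow> (c,d) \<in> M \<Longrightarrow>
   a = c \<or> a = d \<or> b = c \<or> b = d \<Longrightarrow> a = c \<and> b = d"
proof -
  assume M: "is_matching n M" and ab: "(a,b) \<in> M" and cd: "(c,d) \<in> M" and o: "a = c \<or> a = d \<or> b = c \<or> b = d"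
  have "\<forall>e\<in>M. \<forall>e'\<in>M. (fst e = fst e' \<or> fst e = snd e' \<or> snd e = fst e' \<or> snd e = snd e') \<longrightarrow> e = e'"
    using M unfolding matching_iff by blast
  then have "(a,b) = (c,d)" using ab cd o by (metis fst_conv snd_conv)
  then show ?thesis by simp
qed

lemma match_finite: "is_matching n M \<Longrightarrow> finite M"
  by (rule finite_subset[of _ "{1..2*n} \<times> {1..2*n}"]) (auto dest: match_sub)

lemma Mat_finite: "finite {M. is_matching n M}"
  by (rule finite_subset[of _ "Pow ({1..2*n} \<times> {1..2*n})"]) (auto dest: match_sub)

lemma Occ_finite: "is_matching n M \<Longrightarrow> finite (Occ M)"
  by (rule finite_subset[of _ "{..2*n} \<times> {..2*n}"]) (auto simp: Occ_def dest: match_sub)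

lemma sh_inj: "sh g x = sh g y \<longleftrightarrow> x = y"
  by (auto simp: sh_def split: if_splits)

lemma ins_cases: "e \<in> ins n g M \<Longrightarrow> e = (Suc g, 2*n+2) \<or> (\<exists>x y. (x,y) \<in> M \<and> e = (sh g x, sh g y))"
  unfolding ins_def by auto

lemma sh_props:
  assumes M: "is_matching n M" and xy: "(x,y) \<in> M"
  shows "sh g x \<noteq> Suc g" "sh g y \<noteq> Suc g" "sh g x < sh g y" "1 \<le> sh g x" "sh g y \<le> 2*n+1"
proof -
  have "1 \<le> x" "x < y" "y \<le> 2*n" using match_sub[OF M xy] by auto
  then show "sh g x \<noteq> Suc g" "sh g y \<noteq> Suc g" "sh g x < sh g y" "1 \<le> sh g x" "sh g y \<le> 2*n+1"
    by (simp_all add: sh_def)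
qed

lemma ins_matching:
  assumes M: "is_matching n M" and g: "g \<le> 2*n"
  shows "is_matching (Suc n) (ins n g M)"
  unfolding matching_iff
proof (intro conjI ballI impI)
  show "ins n g M \<subseteq> {(a, b). 1 \<le> a \<and> a < b \<and> b \<le> 2 * Suc n}"
  proof
    fix e assume e: "e \<in> ins n g M"
    show "e \<in> {(a, b). 1 \<le> a \<and> a < b \<and> b \<le> 2 * Suc n}"
    proof (cases "e = (Suc g, 2*n+2)")
      case True then show ?thesis using g by simp
    next
      case False
      then obtain x y where "(x,y) \<in> M" "e = (sh g x, sh g y)" using ins_cases[OF e] by blast
      then show ?thesis using sh_props[OF M, of x y g] by simp
    qed
  qed
next
  fix p assume p: "p \<in> {1..2 * Suc n}"
  show "\<exists>e\<in>ins n g M. fst e = p \<or> snd e = p"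
  proof (cases "p = Suc g \<or> p = 2*n+2")
    case True then show ?thesis by (auto simp: ins_def)
  next
    case False
    define q where "q = (if p \<le> g then p else p - 1)"
    have q: "1 \<le> q" "q \<le> 2*n" "sh g q = p" using p False g by (auto simp: q_def sh_def)
    obtain a b where ab: "(a,b) \<in> M" "a = q \<or> b = q" using match_cov[OF M q(1,2)] by blast
    have "(sh g a, sh g b) \<in> ins n g M" using ab(1) by (auto simp: ins_def)
    then show ?thesis using ab(2) q(3) by force
  qed
next
  fix e e' assume e: "e \<in> ins n g M" and e': "e' \<in> ins n g M"
    and c: "fst e = fst e' \<or> fst e = snd e' \<or> snd e = fst e' \<or> snd e = snd e'"
  have Y: "(sh g x, sh g y) = (sh g x', sh g y')"
    if xy: "(x,y) \<in> M" and xy': "(x',y') \<in> M"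
        and "sh g x = sh g x' \<or> sh g x = sh g y' \<or> sh g y = sh g x' \<or> sh g y = sh g y'" for x y x' y'
  proof -
    have "x = x' \<or> x = y' \<or> y = x' \<or> y = y'" using that(3) by (simp add: sh_inj)
    then have "x = x' \<and> y = y'" using match_uniq[OF M xy xy'] by blast
    then show ?thesis by simp
  qed
  show "e = e'"
  proof (cases "e = (Suc g, 2*n+2)")
    case True
    show ?thesis
    proof (cases "e' = (Suc g, 2*n+2)")
      case False
      then obtain x y where "(x,y) \<in> M" "e' = (sh g x, sh g y)" using ins_cases[OF e'] by blast
      then show ?thesis using c True sh_props[OF M, of x y g] by simp
    qed (use True in simp)
  next
    case False
    then obtain x y where xy: "(x,y) \<in> M" "e = (sh g x, sh g y)" using ins_cases[OF e] by blast
    show ?thesis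
    proof (cases "e' = (Suc g, 2*n+2)")
      case True
      then show ?thesis using c xy sh_props[OF M xy(1), of g] by simp
    next
      case False
      then obtain x' y' where x'y': "(x',y') \<in> M" "e' = (sh g x', sh g y')" using ins_cases[OF e'] by blast
      have "sh g x = sh g x' \<or> sh g x = sh g y' \<or> sh g y = sh g x' \<or> sh g y = sh g y'"
        using c xy(2) x'y'(2) by simp
      then show ?thesis using Y[OF xy(1) x'y'(1)] xy(2) x'y'(2) by simp
    qed
  qed
qed

lemma ins_inj:
  assumes M: "is_matching n M" and M': "is_matching n M'" and E: "ins n g M = ins n g' M'"
  shows "g = g' \<and> M = M'"
proof -
  have "(Suc g, 2*n+2) \<in> ins n g M" by (simp add: ins_def)
  then have "(Suc g, 2*n+2) \<in> ins n g' M'" using E by simp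
  from ins_cases[OF this] have gg: "g = g'"
  proof
    assume "\<exists>x y. (x,y) \<in> M' \<and> (Suc g, 2*n+2) = (sh g' x, sh g' y)"
    then obtain x y where "(x,y) \<in> M'" "(Suc g, 2*n+2) = (sh g' x, sh g' y)" by blast
    then show ?thesis using sh_props[OF M', of x y g'] by simp
  qed simp
  define f where "f = (\<lambda>(a::nat,b::nat). (sh g a, sh g b))"
  have nf: "(Suc g, 2*n+2) \<notin> f ` N" if N: "is_matching n N" for N
  proof
    assume "(Suc g, 2*n+2) \<in> f ` N"
    then obtain x y where "(x,y) \<in> N" "(Suc g, 2*n+2) = (sh g x, sh g y)" by (auto simp: f_def)
    then show False using sh_props[OF N, of x y g] by simp
  qed
  have "f ` M = ins n g M - {(Suc g, 2*n+2)}" using nf[OF M] by (auto simp: ins_def f_def)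
  also have "\<dots> = ins n g M' - {(Suc g, 2*n+2)}" using E gg by simp
  also have "\<dots> = f ` M'" using nf[OF M'] by (auto simp: ins_def f_def)
  finally have "f ` M = f ` M'" .
  moreover have "inj f" unfolding f_def inj_def by (auto simp: sh_inj)
  ultimately have "M = M'" by (simp add: inj_image_eq_iff)
  then show ?thesis using gg by simp
qed

definition un :: "nat \<Rightarrow> nat \<Rightarrow> nat" where
  "un g p = (if p \<le> g then p else p - 1)"

lemma sh_un: "p \<noteq> Suc g \<Longrightarrow> sh g (un g p) = p"
  by (auto simp: sh_def un_def)

lemma un_sh: "un g (sh g p) = p"
  by (simp add: sh_def un_def)

lemma un_inj: "p \<noteq> Suc g \<Longrightarrow> q \<noteq> Suc g \<Longrightarrow> un g p = un g q \<Longrightarrow> p = q"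
  by (metis sh_un)

lemma ins_surj:
  assumes M': "is_matching (Suc n) M'"
  shows "\<exists>M g. is_matching n M \<and> g \<le> 2*n \<and> M' = ins n g M"
proof -
  obtain a b where ab: "(a,b) \<in> M'" "a = 2*n+2 \<or> b = 2*n+2"
    using match_cov[OF M', of "2*n+2"] by auto
  have ab2: "1 \<le> a" "a < b" "b \<le> 2*n+2" using match_sub[OF M' ab(1)] by auto
  then have b: "b = 2*n+2" using ab(2) by auto
  define g where "g = a - 1"
  have ag: "a = Suc g" "g \<le> 2*n" using ab2 b by (auto simp: g_def)
  define R where "R = M' - {(a, 2*n+2)}"
  have Rp: "x \<noteq> Suc g" "y \<noteq> Suc g" "x \<noteq> 2*n+2" "y \<noteq> 2*n+2" "1 \<le> x" "x < y" "y \<le> 2*n+2" "(x,y) \<in> M'"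
    if "(x,y) \<in> R" for x y
  proof -
    have xy: "(x,y) \<in> M'" "(x,y) \<noteq> (a, 2*n+2)" using that by (auto simp: R_def)
    have "\<not> (x = a \<or> x = 2*n+2 \<or> y = a \<or> y = 2*n+2)"
    proof
      assume "x = a \<or> x = 2*n+2 \<or> y = a \<or> y = 2*n+2"
      then have "x = a \<and> y = 2*n+2" using match_uniq[OF M' xy(1) ab(1)[unfolded b]] by blast
      then show False using xy(2) by simp
    qed
    then show "x \<noteq> Suc g" "y \<noteq> Suc g" "x \<noteq> 2*n+2" "y \<noteq> 2*n+2" using ag by auto
    show "1 \<le> x" "x < y" "y \<le> 2*n+2" using match_sub[OF M' xy(1)] by auto
    show "(x,y) \<in> M'" using xy by simp
  qed
  define M where "M = (\<lambda>(x,y). (un g x, un g y)) ` R"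
  have "is_matching n M"
    unfolding matching_iff
  proof (intro conjI ballI impI)
    show "M \<subseteq> {(a, b). 1 \<le> a \<and> a < b \<and> b \<le> 2 * n}"
    proof
      fix e assume "e \<in> M"
      then obtain x y where xy: "(x,y) \<in> R" "e = (un g x, un g y)" by (auto simp: M_def)
      note r = Rp[OF xy(1)]
      have "1 \<le> un g x" "un g x < un g y" "un g y \<le> 2*n"
        using r(1-7) ag(2) by (auto simp: un_def)
      then show "e \<in> {(a, b). 1 \<le> a \<and> a < b \<and> b \<le> 2 * n}" using xy(2) by simp
    qed
  next
    fix p assume p: "p \<in> {1..2*n}"
    define q where "q = sh g p"
    have q: "1 \<le> q" "q \<le> 2 * Suc n" "q \<noteq> Suc g" "q \<noteq> 2*n+2" "un g q = p"
      using p by (auto simp: q_def sh_def un_def)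
    obtain x y where xy: "(x,y) \<in> M'" "x = q \<or> y = q" using match_cov[OF M' q(1,2)] by blast
    have "(x,y) \<in> R" using xy q(3,4) ag(1) by (auto simp: R_def)
    then have "(un g x, un g y) \<in> M" by (auto simp: M_def)
    then show "\<exists>e\<in>M. fst e = p \<or> snd e = p" using xy(2) q(5) by force
  next
    fix e e' assume e: "e \<in> M" and e': "e' \<in> M"
      and c: "fst e = fst e' \<or> fst e = snd e' \<or> snd e = fst e' \<or> snd e = snd e'"
    obtain x y where xy: "(x,y) \<in> R" "e = (un g x, un g y)" using e by (auto simp: M_def)
    obtain x' y' where xy': "(x',y') \<in> R" "e' = (un g x', un g y')" using e' by (auto simp: M_def)
    note r = Rp[OF xy(1)] and r' = Rp[OF xy'(1)]
    have "un g x = un g x' \<or> un g x = un g y' \<or> un g y = un g x' \<or> un g y = un g y'"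
      using c xy(2) xy'(2) by simp
    then have "x = x' \<or> x = y' \<or> y = x' \<or> y = y'"
      using un_inj r(1,2) r'(1,2) by blast
    then have "x = x' \<and> y = y'" using match_uniq[OF M' r(8) r'(8)] by blast
    then show "e = e'" using xy(2) xy'(2) by simp
  qed
  moreover have "ins n g M = M'"
  proof -
    have "(\<lambda>(a,b). (sh g a, sh g b)) ` M = (\<lambda>(a,b). (sh g a, sh g b)) ` (\<lambda>(x,y). (un g x, un g y)) ` R"
      by (simp add: M_def)
    also have "\<dots> = (\<lambda>e. e) ` R"
      unfolding image_comp
    proof (rule image_cong[OF refl])
      fix e assume "e \<in> R"
      then obtain x y where "e = (x,y)" "(x,y) \<in> R" by (cases e) auto
      then show "((\<lambda>(a,b). (sh g a, sh g b)) \<circ> (\<lambda>(x,y). (un g x, un g y))) e = e"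
        using Rp[of x y] by (simp add: sh_un)
    qed
    also have "\<dots> = R" by simp
    finally show ?thesis unfolding ins_def R_def using ab(1) b ag(1) by auto
  qed
  ultimately show ?thesis using ag(2) by blast
qed

definition ph :: "nat \<Rightarrow> nat \<Rightarrow> nat" where
  "ph g i = (if i < g then i else Suc i)"

lemma ph_inj: "ph g i = ph g j \<longleftrightarrow> i = j"
  by (auto simp: ph_def)

lemma ph_ne: "ph g i \<noteq> g"
  by (simp add: ph_def)

lemma ph_ne2: "(g = ph g i) = False"
  by (simp add: ph_def)

lemma sh_ph1: "sh g (i+1) = ph g i + 1"
  by (simp add: sh_def ph_def)

lemma sh_ph2: "g \<noteq> i + 1 \<Longrightarrow> sh g (i+2) = ph g i + 2"
  by (simp add: sh_def ph_def)

lemma sh_step: "sh g x + 1 = sh g x' \<Longrightarrow> x' = x + 1 \<and> x \<noteq> g"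
  by (auto simp: sh_def split: if_splits)

lemma Occ_ins:
  assumes M: "is_matching n M" and g: "g \<le> 2*n"
  shows "Occ (ins n g M) = (\<lambda>(i,j). (ph g i, ph g j)) ` {(i,j)\<in>Occ M. g \<noteq> i+1 \<and> g \<noteq> j+1}
           \<union> (if (Suc g, 2*n) \<in> M then {(g, 2*n)} else {})"
proof (intro equalityI subsetI)
  fix oc assume "oc \<in> Occ (ins n g M)"
  then obtain i j where oc: "oc = (i,j)" and A: "(i+1, j+2) \<in> ins n g M" and B: "(i+2, j+1) \<in> ins n g M"
    by (auto simp: Occ_def)
  show "oc \<in> (\<lambda>(i,j). (ph g i, ph g j)) ` {(i,j)\<in>Occ M. g \<noteq> i+1 \<and> g \<noteq> j+1}
           \<union> (if (Suc g, 2*n) \<in> M then {(g, 2*n)} else {})"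
  proof (cases "(i+1, j+2) = (Suc g, 2*n+2)")
    case True
    then have ij: "i = g" "j = 2*n" by auto
    have "(i+2, j+1) \<noteq> (Suc g, 2*n+2)" using ij by simp
    then obtain x y where xy: "(x,y) \<in> M" "(i+2, j+1) = (sh g x, sh g y)" using ins_cases[OF B] by blast
    have "x = Suc g" "y = 2*n" using xy(2) ij match_sub[OF M xy(1)] by (auto simp: sh_def split: if_splits)
    then show ?thesis using xy(1) oc ij by simp
  next
    case False
    then obtain x y where xy: "(x,y) \<in> M" "(i+1, j+2) = (sh g x, sh g y)" using ins_cases[OF A] by blast
    have "(i+2, j+1) \<noteq> (Suc g, 2*n+2)"
      using xy(2) sh_props[OF M xy(1), of g] by auto
    then obtain x' y' where xy': "(x',y') \<in> M" "(i+2, j+1) = (sh g x', sh g y')" using ins_cases[OF B] by blast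
    have e1: "sh g x + 1 = sh g x'" and e2: "sh g y' + 1 = sh g y" using xy(2) xy'(2) by auto
    from sh_step[OF e1] have x': "x' = x + 1" "x \<noteq> g" by auto
    from sh_step[OF e2] have y: "y = y' + 1" "y' \<noteq> g" by auto
    have x1: "1 \<le> x" "1 \<le> y'" using match_sub[OF M xy(1)] match_sub[OF M xy'(1)] by auto
    define i0 where "i0 = x - 1"
    define j0 where "j0 = y' - 1"
    have "(i0+1, j0+2) = (x,y)" "(i0+2, j0+1) = (x',y')" using x1 x' y by (auto simp: i0_def j0_def)
    then have occ: "(i0,j0) \<in> Occ M" using xy(1) xy'(1) by (auto simp: Occ_def)
    have gne: "g \<noteq> i0+1" "g \<noteq> j0+1" using x1 x'(2) y(2) by (auto simp: i0_def j0_def)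
    have "ph g i0 = i" using sh_ph1[of g i0] xy(2) x1 by (simp add: i0_def)
    moreover have "ph g j0 = j" using sh_ph1[of g j0] xy'(2) x1 by (simp add: j0_def)
    ultimately have "oc = (\<lambda>(i,j). (ph g i, ph g j)) (i0, j0)" using oc by simp
    then show ?thesis using occ gne by blast
  qed
next
  fix oc assume oc: "oc \<in> (\<lambda>(i,j). (ph g i, ph g j)) ` {(i,j)\<in>Occ M. g \<noteq> i+1 \<and> g \<noteq> j+1}
           \<union> (if (Suc g, 2*n) \<in> M then {(g, 2*n)} else {})"
  show "oc \<in> Occ (ins n g M)"
  proof (cases "oc \<in> (if (Suc g, 2*n) \<in> M then {(g, 2*n)} else {})")
    case True
    then have o1: "oc = (g, 2*n)" and m: "(Suc g, 2*n) \<in> M" by (auto split: if_splits)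
    have lt: "Suc g < 2*n" using match_sub[OF M m] by simp
    have "(sh g (Suc g), sh g (2*n)) \<in> ins n g M" using m by (force simp: ins_def)
    moreover have "(sh g (Suc g), sh g (2*n)) = (g+2, 2*n+1)" using lt by (simp add: sh_def)
    ultimately have "(g+2, 2*n+1) \<in> ins n g M" by simp
    moreover have "(g+1, 2*n+2) \<in> ins n g M" by (simp add: ins_def)
    ultimately show ?thesis using o1 by (simp add: Occ_def)
  next
    case False
    then obtain i j where ij: "(i,j) \<in> Occ M" "g \<noteq> i+1" "g \<noteq> j+1" "oc = (ph g i, ph g j)"
      using oc by auto
    have A: "(i+1, j+2) \<in> M" and B: "(i+2, j+1) \<in> M" using ij(1) by (auto simp: Occ_def)
    have "(sh g (i+1), sh g (j+2)) \<in> ins n g M" using A by (force simp: ins_def)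
    then have A': "(ph g i + 1, ph g j + 2) \<in> ins n g M" using sh_ph1 sh_ph2[OF ij(3)] by simp
    have "(sh g (i+2), sh g (j+1)) \<in> ins n g M" using B by (force simp: ins_def)
    then have B': "(ph g i + 2, ph g j + 1) \<in> ins n g M" using sh_ph1 sh_ph2[OF ij(2)] by simp
    show ?thesis using A' B' ij(4) by (simp add: Occ_def)
  qed
qed

lemma occ_ins:
  assumes M: "is_matching n M" and g: "g \<le> 2*n"
  shows "occ21 (ins n g M) = card {(i,j)\<in>Occ M. g \<noteq> i+1 \<and> g \<noteq> j+1}
           + (if (Suc g, 2*n) \<in> M then 1 else 0)"
proof -
  let ?F = "{(i,j)\<in>Occ M. g \<noteq> i+1 \<and> g \<noteq> j+1}"
  let ?f = "(\<lambda>(i::nat,j::nat). (ph g i, ph g j))"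
  have fin: "finite ?F" using Occ_finite[OF M] by (rule finite_subset[rotated]) auto
  have inj: "inj_on ?f ?F" by (auto simp: inj_on_def ph_inj)
  have disj: "?f ` ?F \<inter> (if (Suc g, 2*n) \<in> M then {(g, 2*n)} else {}) = {}"
    using ph_ne2 by auto
  have "occ21 (ins n g M) = card (?f ` ?F \<union> (if (Suc g, 2*n) \<in> M then {(g, 2*n)} else {}))"
    by (simp add: occ21_Occ Occ_ins[OF M g])
  also have "\<dots> = card (?f ` ?F) + card (if (Suc g, 2*n) \<in> M then {(g, 2*n)} else {})"
    by (rule card_Un_disjoint) (use fin disj in auto)
  also have "\<dots> = card ?F + (if (Suc g, 2*n) \<in> M then 1 else 0)"
    using card_image[OF inj] by simp
  finally show ?thesis .
qed

definition D :: "(nat \<times> nat) set \<Rightarrow> nat set" where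
  "D M = (\<lambda>(i,j). i+1) ` Occ M \<union> (\<lambda>(i,j). j+1) ` Occ M"

lemma Occ_dist:
  assumes M: "is_matching n M" and o1: "(i,j) \<in> Occ M" and o2: "(i',j') \<in> Occ M"
  shows "i = i' \<Longrightarrow> (i,j) = (i',j')" "j = j' \<Longrightarrow> (i,j) = (i',j')" "i+1 \<noteq> j'+1"
proof -
  have a: "(i+1, j+2) \<in> M" "(i+2, j+1) \<in> M" using o1 by (auto simp: Occ_def)
  have b: "(i'+1, j'+2) \<in> M" "(i'+2, j'+1) \<in> M" using o2 by (auto simp: Occ_def)
  show "i = i' \<Longrightarrow> (i,j) = (i',j')" using match_uniq[OF M a(1) b(1)] by simp
  show "j = j' \<Longrightarrow> (i,j) = (i',j')" using match_uniq[OF M a(2) b(2)] by simp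
  show "i+1 \<noteq> j'+1"
  proof
    assume "i+1 = j'+1"
    then have "i+1 = i'+2 \<and> j+2 = j'+1" using match_uniq[OF M a(1) b(2)] by simp
    then show False using match_sub[OF M b(2)] \<open>i+1 = j'+1\<close> match_sub[OF M a(1)] by simp
  qed
qed

lemma card_D: assumes M: "is_matching n M" shows "card (D M) = 2 * card (Occ M)"
proof -
  have fin: "finite (Occ M)" using Occ_finite[OF M] .
  have i1: "inj_on (\<lambda>(i::nat,j::nat). i+1) (Occ M)"
    unfolding inj_on_def using Occ_dist(1)[OF M] by auto
  have i2: "inj_on (\<lambda>(i::nat,j::nat). j+1) (Occ M)"
    unfolding inj_on_def using Occ_dist(2)[OF M] by auto
  have dj: "(\<lambda>(i::nat,j::nat). i+1) ` Occ M \<inter> (\<lambda>(i,j). j+1) ` Occ M = {}"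
    using Occ_dist(3)[OF M] by fastforce
  have "card (D M) = card ((\<lambda>(i::nat,j::nat). i+1) ` Occ M) + card ((\<lambda>(i::nat,j::nat). j+1) ` Occ M)"
    unfolding D_def by (rule card_Un_disjoint) (use fin dj in auto)
  also have "\<dots> = 2 * card (Occ M)" using card_image[OF i1] card_image[OF i2] by simp
  finally show ?thesis .
qed

lemma D_sub: assumes M: "is_matching n M" shows "D M \<subseteq> {0..2*n}"
proof
  fix g assume "g \<in> D M"
  then obtain i j where "(i,j) \<in> Occ M" "g = i+1 \<or> g = j+1" by (auto simp: D_def)
  then have "(i+1, j+2) \<in> M" "(i+2, j+1) \<in> M" "g = i+1 \<or> g = j+1" by (auto simp: Occ_def)
  then show "g \<in> {0..2*n}" using match_sub[OF M] by fastforce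
qed

lemma filt_notD: "g \<notin> D M \<Longrightarrow> {(i,j)\<in>Occ M. g \<noteq> i+1 \<and> g \<noteq> j+1} = Occ M"
  by (auto simp: D_def)

lemma filt_D:
  assumes M: "is_matching n M" and g: "g \<in> D M"
  shows "card {(i,j)\<in>Occ M. g \<noteq> i+1 \<and> g \<noteq> j+1} = card (Occ M) - 1"
proof -
  obtain i0 j0 where o0: "(i0,j0) \<in> Occ M" "g = i0+1 \<or> g = j0+1" using g by (auto simp: D_def)
  have "{(i,j)\<in>Occ M. g \<noteq> i+1 \<and> g \<noteq> j+1} = Occ M - {(i0,j0)}"
  proof (intro equalityI subsetI)
    fix x assume "x \<in> {(i,j)\<in>Occ M. g \<noteq> i+1 \<and> g \<noteq> j+1}"
    then show "x \<in> Occ M - {(i0,j0)}" using o0 by auto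
  next
    fix x assume x: "x \<in> Occ M - {(i0,j0)}"
    then obtain i j where ij: "x = (i,j)" "(i,j) \<in> Occ M" "(i,j) \<noteq> (i0,j0)" by (cases x) auto
    have "g \<noteq> i+1"
      using o0(2) Occ_dist(1)[OF M ij(2) o0(1)] Occ_dist(3)[OF M ij(2) o0(1)] ij(3) by auto
    moreover have "g \<noteq> j+1"
      using o0(2) Occ_dist(2)[OF M ij(2) o0(1)] Occ_dist(3)[OF M o0(1) ij(2)] ij(3) by auto
    ultimately show "x \<in> {(i,j)\<in>Occ M. g \<noteq> i+1 \<and> g \<noteq> j+1}" using ij by simp
  qed
  then show ?thesis using o0(1) Occ_finite[OF M] by simp
qed

lemma g0_ex:
  assumes M: "is_matching n M" and n: "1 \<le> n"
  shows "\<exists>g0. g0 \<le> 2*n \<and> g0 \<notin> D M \<and> (\<forall>g. (Suc g, 2*n) \<in> M \<longleftrightarrow> g = g0)"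
proof -
  obtain a b where ab: "(a,b) \<in> M" "a = 2*n \<or> b = 2*n" using match_cov[OF M, of "2*n"] n by auto
  have s: "1 \<le> a" "a < b" "b \<le> 2*n" using match_sub[OF M ab(1)] by auto
  then have b: "b = 2*n" using ab(2) by auto
  define g0 where "g0 = a - 1"
  have a: "a = Suc g0" using s by (simp add: g0_def)
  have uq: "(Suc g, 2*n) \<in> M \<longleftrightarrow> g = g0" for g
  proof
    assume "(Suc g, 2*n) \<in> M"
    then show "g = g0" using match_uniq[OF M _ ab(1)[unfolded b a]] by auto
  qed (use ab(1) a b in simp)
  have nD: "g0 \<notin> D M"
  proof
    assume "g0 \<in> D M"
    then obtain i j where ij: "(i,j) \<in> Occ M" "g0 = i+1 \<or> g0 = j+1" by (auto simp: D_def)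
    have A: "(i+1, j+2) \<in> M" and B: "(i+2, j+1) \<in> M" using ij(1) by (auto simp: Occ_def)
    have M0: "(Suc g0, 2*n) \<in> M" using uq by simp
    show False
    proof (cases "g0 = i+1")
      case True
      then have "j+1 = 2*n" using match_uniq[OF M B M0] by auto
      then show False using match_sub[OF M A] by simp
    next
      case False
      then have "g0 = j+1" using ij(2) by simp
      then have "Suc g0 = j+2" by simp
      then show False using match_uniq[OF M A M0] match_sub[OF M A] by auto
    qed
  qed
  show ?thesis using uq nD s a by (intro exI[of _ g0]) auto
qed

lemma count_g:
  assumes M: "is_matching n M" and n: "1 \<le> n"
  shows "card {g\<in>{0..2*n}. occ21 (ins n g M) = k} =
    (if occ21 M = k+1 then 2*(k+1) else 0) + (if occ21 M = k then 2*n - 2*k else 0)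
    + (if occ21 M + 1 = k then 1 else 0)"
proof -
  obtain g0 where g0: "g0 \<le> 2*n" "g0 \<notin> D M" "\<And>g. (Suc g, 2*n) \<in> M \<longleftrightarrow> g = g0"
    using g0_ex[OF M n] by blast
  define c where "c = occ21 M"
  have cD: "card (D M) = 2*c" using card_D[OF M] by (simp add: c_def occ21_Occ)
  have finD: "finite (D M)" using D_sub[OF M] finite_subset by blast
  have c1: "g \<in> D M \<Longrightarrow> 1 \<le> c" for g using cD finD
    by (metis One_nat_def Suc_leI card_gt_0_iff empty_iff mult_0_right neq0_conv)
  have f: "occ21 (ins n g M) = (if g \<in> D M then c - 1 else c) + (if g = g0 then 1 else 0)"
    if g: "g \<le> 2*n" for g
  proof -
    have "occ21 (ins n g M) = card {(i,j)\<in>Occ M. g \<noteq> i+1 \<and> g \<noteq> j+1} + (if g = g0 then 1 else 0)"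
      using occ_ins[OF M g] g0(3) by simp
    also have "card {(i,j)\<in>Occ M. g \<noteq> i+1 \<and> g \<noteq> j+1} = (if g \<in> D M then c - 1 else c)"
      using filt_D[OF M] filt_notD by (simp add: c_def occ21_Occ)
    finally show ?thesis .
  qed
  let ?S = "{g\<in>{0..2*n}. occ21 (ins n g M) = k}"
  have DA: "D M \<subseteq> {0..2*n}" using D_sub[OF M] .
  consider "c = k+1" | "c = k" | "c + 1 = k" | "c \<noteq> k+1" "c \<noteq> k" "c + 1 \<noteq> k" by blast
  then show ?thesis
  proof cases
    case 1
    have "?S = D M"
    proof (intro equalityI subsetI)
      fix g assume "g \<in> ?S"
      then show "g \<in> D M" using f[of g] 1 by (auto split: if_splits)
    next
      fix g assume "g \<in> D M"
      then show "g \<in> ?S" using f[of g] 1 DA g0(2) by auto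
    qed
    then show ?thesis using cD 1 by (simp add: c_def)
  next
    case 2
    have "?S = {0..2*n} - (insert g0 (D M))"
    proof (intro equalityI subsetI)
      fix g assume g: "g \<in> ?S"
      then show "g \<in> {0..2*n} - (insert g0 (D M))" using f[of g] 2 c1[of g] g0(2) by (auto split: if_splits)
    next
      fix g assume "g \<in> {0..2*n} - (insert g0 (D M))"
      then show "g \<in> ?S" using f[of g] 2 by auto
    qed
    moreover have "card ({0..2*n} - (insert g0 (D M))) = 2*n - 2*k"
    proof -
      have "insert g0 (D M) \<subseteq> {0..2*n}" using DA g0(1) by auto
      then have "card ({0..2*n} - (insert g0 (D M))) = card {0..2*n} - card (insert g0 (D M))"
        by (intro card_Diff_subset) (use finD in auto)
      also have "card (insert g0 (D M)) = 2*c + 1" using finD g0(2) cD by simp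
      finally show ?thesis using 2 by simp
    qed
    ultimately show ?thesis using 2 by (simp add: c_def)
  next
    case 3
    have "?S = {g0}"
    proof (intro equalityI subsetI)
      fix g assume g: "g \<in> ?S"
      then show "g \<in> {g0}" using f[of g] 3 by (auto split: if_splits)
    next
      fix g assume "g \<in> {g0}"
      then show "g \<in> ?S" using f[of g] 3 g0 by auto
    qed
    then show ?thesis using 3 by (simp add: c_def)
  next
    case 4
    have "?S = {}"
    proof (intro equalityI subsetI)
      fix g assume g: "g \<in> ?S"
      then show "g \<in> {}" using f[of g] 4 c1[of g] g0(2) by (auto split: if_splits)
    qed simp
    then show ?thesis using 4 by (simp add: c_def)
  qed
qed

definition mk :: "nat \<Rightarrow> nat \<Rightarrow> nat" where
  "mk n k = card {M. is_matching n M \<and> occ21 M = k}"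

lemma sum_if_const: "finite A \<Longrightarrow> (\<Sum>x\<in>A. if P x then (c::nat) else 0) = c * card {x\<in>A. P x}"
  by (simp add: sum.inter_filter[symmetric])

lemma mk_rec:
  assumes n: "1 \<le> n"
  shows "mk (Suc n) k = 2*(k+1)*mk n (k+1) + (2*n-2*k)*mk n k + (if 1 \<le> k then mk n (k-1) else 0)"
proof -
  let ?A = "{M. is_matching n M}"
  let ?B = "\<lambda>M. {g\<in>{0..2*n}. occ21 (ins n g M) = k}"
  let ?h = "\<lambda>(M,g). ins n g M"
  have eq: "{M'. is_matching (Suc n) M' \<and> occ21 M' = k} = ?h ` Sigma ?A ?B"
  proof (intro equalityI subsetI)
    fix M' assume "M' \<in> {M'. is_matching (Suc n) M' \<and> occ21 M' = k}"
    then have M': "is_matching (Suc n) M'" "occ21 M' = k" by auto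
    obtain M g where "is_matching n M" "g \<le> 2*n" "M' = ins n g M" using ins_surj[OF M'(1)] by blast
    then show "M' \<in> ?h ` Sigma ?A ?B" using M'(2) by (intro image_eqI[of _ _ "(M,g)"]) auto
  next
    fix M' assume "M' \<in> ?h ` Sigma ?A ?B"
    then obtain M g where "is_matching n M" "g \<le> 2*n" "occ21 (ins n g M) = k" "M' = ins n g M" by auto
    then show "M' \<in> {M'. is_matching (Suc n) M' \<and> occ21 M' = k}" using ins_matching by auto
  qed
  have inj: "inj_on ?h (Sigma ?A ?B)"
  proof (rule inj_onI)
    fix x y assume "x \<in> Sigma ?A ?B" "y \<in> Sigma ?A ?B" "?h x = ?h y"
    then obtain M g M2 g2 where xy: "x = (M,g)" "y = (M2,g2)" "is_matching n M" "is_matching n M2"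
      "ins n g M = ins n g2 M2" by (cases x, cases y) auto
    then have "g = g2 \<and> M = M2" using ins_inj[of n M M2 g g2] by blast
    then show "x = y" using xy by simp
  qed
  have "mk (Suc n) k = card (Sigma ?A ?B)"
    unfolding mk_def eq using card_image[OF inj] by simp
  also have "\<dots> = (\<Sum>M\<in>?A. card (?B M))"
    by (rule card_SigmaI) (auto simp: Mat_finite)
  also have "\<dots> = (\<Sum>M\<in>?A. (if occ21 M = k+1 then 2*(k+1) else 0) + (if occ21 M = k then 2*n - 2*k else 0)
    + (if occ21 M + 1 = k then 1 else 0))"
  proof (rule sum.cong[OF refl])
    fix M assume "M \<in> ?A"
    then have "is_matching n M" by simp
    then show "card (?B M) = (if occ21 M = k+1 then 2*(k+1) else 0) + (if occ21 M = k then 2*n - 2*k else 0)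
    + (if occ21 M + 1 = k then 1 else 0)" by (rule count_g[OF _ n])
  qed
  also have "\<dots> = (\<Sum>M\<in>?A. if occ21 M = k+1 then 2*(k+1) else 0) + (\<Sum>M\<in>?A. if occ21 M = k then 2*n - 2*k else 0)
    + (\<Sum>M\<in>?A. if occ21 M + 1 = k then 1 else 0)"
    by (simp add: sum.distrib)
  also have "\<dots> = 2*(k+1)*mk n (k+1) + (2*n-2*k)*mk n k + card {M\<in>?A. occ21 M + 1 = k}"
    by (simp add: sum_if_const Mat_finite mk_def)
  also have "card {M\<in>?A. occ21 M + 1 = k} = (if 1 \<le> k then mk n (k-1) else 0)"
  proof (cases "1 \<le> k")
    case True
    then have "{M\<in>?A. occ21 M + 1 = k} = {M. is_matching n M \<and> occ21 M = k - 1}" by auto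
    then show ?thesis using True by (simp add: mk_def)
  next
    case False
    then show ?thesis by simp
  qed
  finally show ?thesis .
qed

lemma match1: "is_matching 1 M \<longleftrightarrow> M = {(1,2)}"
proof
  assume M: "is_matching 1 M"
  have sub: "M \<subseteq> {(1,2)}" using match_sub[OF M] by fastforce
  obtain a b where "(a,b) \<in> M" using match_cov[OF M, of 1] by auto
  then show "M = {(1,2)}" using sub by auto
next
  assume "M = {(1,2)}"
  then show "is_matching 1 M" unfolding matching_iff by auto
qed

lemma mk1: "mk 1 k = (if k = 0 then 1 else 0)"
proof -
  have "occ21 {(1,2)} = 0" by (simp add: occ21_Occ Occ_def)
  moreover have "{M. is_matching 1 M \<and> occ21 M = k} = {M. M = {(1,2)} \<and> occ21 M = k}"
    by (simp only: match1)
  ultimately have "{M. is_matching 1 M \<and> occ21 M = k} = (if k = 0 then {{(1,2)}} else {})"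
    by auto
  then show ?thesis by (simp add: mk_def)
qed

fun z :: "nat \<Rightarrow> nat" where
  "z 0 = 0"
| "z (Suc 0) = 1"
| "z (Suc (Suc j)) = 2*(j+1)*z (Suc j) + 2*j*z j"

lemma binom_key: "(k+1) * ((k+d) choose (k+1)) = d * ((k+d) choose k)"
proof -
  have e1: "Suc (k+d) * ((k+d) choose k) = (Suc (k+d) choose Suc k) * Suc k"
    by (rule Suc_times_binomial_eq)
  have e2: "(Suc (k+d) choose Suc k) = ((k+d) choose k) + ((k+d) choose Suc k)"
    by simp
  from e1 e2 have "Suc (k+d) * ((k+d) choose k) = (((k+d) choose k) + ((k+d) choose Suc k)) * Suc k"
    by simp
  then show ?thesis by (simp add: algebra_simps)
qed

lemma binom_split: "((k+d+1) choose k) = ((k+d) choose k) + (if 1 \<le> k then ((k+d) choose (k-1)) else 0)"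
  by (cases k) auto

lemma alg:
  "(Suc m choose k) * z (Suc (Suc m) - k) =
    2*(k+1)*((m choose (k+1)) * z (Suc m - (k+1))) + (2*Suc m - 2*k)*((m choose k) * z (Suc m - k))
    + (if 1 \<le> k then (m choose (k-1)) * z (Suc m - (k-1)) else 0)"
proof -
  consider "Suc m < k" | "k = Suc m" | "k \<le> m" by linarith
  then show ?thesis
  proof cases
    case 1 then show ?thesis by (simp add: binomial_eq_0)
  next
    case 2 then show ?thesis by (simp add: binomial_eq_0)
  next
    case 3
    then obtain d where d: "m = k + d" using le_Suc_ex by blast
    have zz: "z (d+2) = 2*(d+1)*z (d+1) + 2*d*z d" by (simp add: numeral_2_eq_2)
    have l1: "Suc (Suc m) - k = d+2" "Suc m - (k+1) = d" "Suc m - k = d + 1" "2*Suc m - 2*k = 2*d+2"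
      using d by auto
    have l2: "1 \<le> k \<Longrightarrow> Suc m - (k-1) = d+2" using d by auto
    have bs: "(Suc m choose k) = (m choose k) + (if 1 \<le> k then (m choose (k-1)) else 0)"
      using binom_split[of k d] d by simp
    have bk: "(k+1) * (m choose (k+1)) = d * (m choose k)" using binom_key[of k d] d by simp
    define A where "A = (m choose k)"
    define B where "B = (if 1 \<le> k then (m choose (k-1)) * z (d+2) else 0)"
    have "(Suc m choose k) * z (Suc (Suc m) - k) = A * z (d+2) + B"
      unfolding A_def B_def l1 bs by (simp add: algebra_simps)
    also have "\<dots> = 2*(d*A)*z d + (2*d+2)*A*z (d+1) + B"
      unfolding zz by (simp add: algebra_simps)
    also have "\<dots> = 2*((k+1)*(m choose (k+1)))*z d + (2*d+2)*A*z (d+1) + B"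
      unfolding bk A_def by simp
    also have "\<dots> = 2*(k+1)*((m choose (k+1)) * z (Suc m - (k+1))) + (2*Suc m - 2*k)*((m choose k) * z (Suc m - k))
    + (if 1 \<le> k then (m choose (k-1)) * z (Suc m - (k-1)) else 0)"
      unfolding l1 A_def B_def using l2 by (simp add: algebra_simps)
    finally show ?thesis .
  qed
qed

lemma mk_closed: "mk (Suc m) k = (m choose k) * z (Suc m - k)"
proof (induction m arbitrary: k)
  case 0
  then show ?case using mk1[of k] by (cases k) (simp_all add: One_nat_def)
next
  case (Suc m)
  have "mk (Suc (Suc m)) k = 2*(k+1)*mk (Suc m) (k+1) + (2*Suc m-2*k)*mk (Suc m) k
     + (if 1 \<le> k then mk (Suc m) (k-1) else 0)"
    by (rule mk_rec) simp
  also have "\<dots> = (Suc m choose k) * z (Suc (Suc m) - k)"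
    unfolding Suc.IH alg ..
  finally show ?case .
qed

theorem corollary3:
  shows "a1 1 = 0 \<and> a1 2 = 1 \<and> (\<forall>n\<ge>2. a1 (n + 1) = 2 * n * (a1 n + a1 (n - 1)))"
proof -
  have a: "a1 n = mk n 1" for n by (simp add: a1_def mk_def)
  have c: "a1 (Suc m) = m * z m" for m
    unfolding a mk_closed by (cases m) auto
  have r: "a1 (n + 1) = 2 * n * (a1 n + a1 (n - 1))" if n: "n \<ge> 2" for n
  proof -
    obtain m' where m': "n = Suc (Suc m')" using n by (metis add_2_eq_Suc le_Suc_ex)
    have "a1 (n+1) = Suc (Suc m') * z (Suc (Suc m'))" using c[of n] m' by simp
    also have "\<dots> = Suc (Suc m') * (2*(m'+1)*z (Suc m') + 2*m'*z m')" by simp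
    also have "\<dots> = 2 * n * (a1 n + a1 (n - 1))"
      using c[of "Suc m'"] c[of m'] m' by (simp add: algebra_simps)
    finally show ?thesis .
  qed
  have "a1 1 = 0" using c[of 0] by simp
  moreover have "a1 2 = 1" using c[of 1] by (simp add: numeral_2_eq_2)
  ultimately show ?thesis using r by blast
qed

end
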